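(* For each positive integer $n$, let $\Gamma_n$ be the set of non-negative integers that can be expressed as a finite sum of squares of integers greater than or equal to $n$ (the empty sum being $0$), and let $F(\Gamma_n)$ denote the greatest integer not belonging to $\Gamma_n$. Then $F(\Gamma_n)=O(n^2)$; that is, there is a constant $C>0$ such that $F(\Gamma_n)\le C n^2$ for all positive integers $n$.
   Context: For every positive integer $n$ the set $\mathbb{N}\setminus\Gamma_n$ of non-negative integers not in $\Gamma_n$ is finite (since $\gcd(n^2,(n+1)^2)=1$), so $F(\Gamma_n)$ is well defined. *)

theory Defs
  imports "HOL-Analysis.Analysis"
begin

definition Gamma :: "nat \<Rightarrow> int set" where
  "Gamma n = {m. \<exists>xs :: int list. (\<forall>x\<in>set xs. x \<ge> int n) \<and> m = (\<Sum>x\<leftarrow>xs. x^2)}"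

text \<open>Frobenius number: greatest integer not in the set (among non-negative integers);
  by the usual convention it is -1 if every non-negative integer belongs to the set.\<close>
definition Frob :: "int set \<Rightarrow> int" where
  "Frob S = (if {m::int. m \<ge> 0 \<and> m \<notin> S} = {} then -1 else Max {m::int. m \<ge> 0 \<and> m \<notin> S})"

end

theory Submission
  imports Defs "HOL-Computational_Algebra.Primes"
begin


definition sos4 :: "int \<Rightarrow> bool" where
  "sos4 m \<longleftrightarrow> (\<exists>a b c d. m = a^2+b^2+c^2+d^2)"

lemma euler_id:
  fixes x1 x2 x3 x4 y1 y2 y3 y4 :: int
  shows "(x1^2+x2^2+x3^2+x4^2)*(y1^2+y2^2+y3^2+y4^2) =
   (x1*y1+x2*y2+x3*y3+x4*y4)^2 + (x1*y2-x2*y1+x3*y4-x4*y3)^2 +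
   (x1*y3-x2*y4-x3*y1+x4*y2)^2 + (x1*y4+x2*y3-x3*y2-x4*y1)^2"
  by (simp add: power2_eq_square algebra_simps)

lemma sos4_mult: "sos4 a \<Longrightarrow> sos4 b \<Longrightarrow> sos4 (a*b)"
  unfolding sos4_def using euler_id by metis

lemma sq_mod_inj:
  fixes p :: int
  assumes p: "prime p" and x: "0 \<le> x" "2*x < p" and y: "0 \<le> y" "2*y < p"
    and eq: "x^2 mod p = y^2 mod p"
  shows "x = y"
proof -
  have "p dvd x^2 - y^2" using eq by (simp add: mod_eq_dvd_iff)
  moreover have "x^2 - y^2 = (x-y)*(x+y)" by (simp add: power2_eq_square algebra_simps)
  ultimately have "p dvd (x-y) \<or> p dvd (x+y)" using p by (simp add: prime_dvd_mult_iff)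
  then show ?thesis
  proof
    assume h: "p dvd x - y"
    show ?thesis
    proof (rule ccontr)
      assume "x \<noteq> y"
      then have "\<bar>p\<bar> \<le> \<bar>x-y\<bar>" using h dvd_imp_le_int by simp
      then show False using x y by auto
    qed
  next
    assume h: "p dvd x + y"
    show ?thesis
    proof (rule ccontr)
      assume "x \<noteq> y"
      then have "x + y \<noteq> 0" using x y by auto
      then have "\<bar>p\<bar> \<le> \<bar>x+y\<bar>" using h dvd_imp_le_int by simp
      then show False using x y by auto
    qed
  qed
qed

lemma exists_xy:
  fixes p :: int
  assumes p: "prime p" and odd: "odd p"
  shows "\<exists>x y. 0 \<le> x \<and> 2*x < p \<and> 0 \<le> y \<and> 2*y < p \<and> p dvd x^2+y^2+1"
proof -
  define h where "h = (p-1) div 2"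
  have p2: "p \<ge> 2" using p prime_ge_2_int by blast
  have hp: "2*h + 1 = p" using odd unfolding h_def by (simp add: odd_two_times_div_two_succ)
  define A where "A = (\<lambda>x. x^2 mod p) ` {0..h}"
  define B where "B = (\<lambda>y. (-1-y^2) mod p) ` {0..h}"
  have rng: "\<And>x. x \<in> {0..h} \<Longrightarrow> 0 \<le> x \<and> 2*x < p" using hp by auto
  have injA: "inj_on (\<lambda>x. x^2 mod p) {0..h}"
  proof (rule inj_onI)
    fix x y assume xy: "x \<in> {0..h}" "y \<in> {0..h}" "x^2 mod p = y^2 mod p"
    show "x = y" using sq_mod_inj[OF p _ _ _ _ xy(3)] rng[OF xy(1)] rng[OF xy(2)] by blast
  qed
  have injB: "inj_on (\<lambda>y. (-1-y^2) mod p) {0..h}"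
  proof (rule inj_onI)
    fix x y assume xy: "x \<in> {0..h}" "y \<in> {0..h}" "(-1-x^2) mod p = (-1-y^2) mod p"
    then have "p dvd (-1-x^2) - (-1-y^2)" by (simp only: mod_eq_dvd_iff)
    then have "p dvd x^2 - y^2" by (simp add: dvd_diff_commute)
    then have e: "x^2 mod p = y^2 mod p" by (simp only: mod_eq_dvd_iff)
    show "x = y" using sq_mod_inj[OF p _ _ _ _ e] rng[OF xy(1)] rng[OF xy(2)] by blast
  qed
  have cA: "card A = nat (h+1)" unfolding A_def using card_image[OF injA] by simp
  have cB: "card B = nat (h+1)" unfolding B_def using card_image[OF injB] by simp
  have p0: "p > 0" using p2 by simp
  have subA: "A \<subseteq> {0..<p}" unfolding A_def using p0 by (auto intro: pos_mod_sign pos_mod_bound)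
  have subB: "B \<subseteq> {0..<p}" unfolding B_def using p0 by (auto intro: pos_mod_sign pos_mod_bound)
  have fA: "finite A" unfolding A_def by simp
  have fB: "finite B" unfolding B_def by simp
  have "A \<inter> B \<noteq> {}"
  proof
    assume e: "A \<inter> B = {}"
    have "card (A \<union> B) = card A + card B" using card_Un_disjoint[OF fA fB e] .
    also have "\<dots> = nat p + 1" using cA cB hp p2 by simp
    finally have "card (A \<union> B) = nat p + 1" .
    moreover have "card (A \<union> B) \<le> card {0..<p}" by (rule card_mono) (use subA subB in auto)
    ultimately show False by simp
  qed
  then obtain x y where xy: "x \<in> {0..h}" "y \<in> {0..h}" "x^2 mod p = (-1-y^2) mod p"
    unfolding A_def B_def by blast
  then have "p dvd x^2 - (-1-y^2)" by (simp only: mod_eq_dvd_iff)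
  moreover have "x^2 - (-1-y^2) = x^2+y^2+1" by simp
  ultimately have "p dvd x^2+y^2+1" by metis
  then show ?thesis using rng[OF xy(1)] rng[OF xy(2)] by blast
qed

lemma cent:
  fixes m x :: int
  assumes m: "m > 0"
  shows "\<exists>k y. x = y + m*k \<and> -((m-1) div 2) \<le> y \<and> 2*y \<le> m"
proof -
  define h where "h = (m-1) div 2"
  define y where "y = (x + h) mod m - h"
  have "x + h = m * ((x+h) div m) + (x+h) mod m" by simp
  then have "x = y + m*((x+h) div m)" unfolding y_def by linarith
  moreover have "0 \<le> (x+h) mod m" "(x+h) mod m < m" using m by auto
  moreover have "2*h \<ge> m - 2" "2*h \<le> m - 1" unfolding h_def by linarith+
  ultimately show ?thesis unfolding y_def h_def[symmetric] by (intro exI[of _ "(x+h) div m"] exI[of _ y]) (auto simp: y_def)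
qed

lemma small_sq:
  fixes m y :: int
  assumes "-((m-1) div 2) \<le> y" "2*y \<le> m" "m > 0"
  shows "4*y^2 \<le> m^2" and "4*y^2 = m^2 \<Longrightarrow> 2*y = m"
proof -
  have a: "\<bar>2*y\<bar> \<le> \<bar>m\<bar>" using assms by linarith
  have "(2*y)^2 \<le> m^2" using a abs_le_square_iff by blast
  then show "4*y^2 \<le> m^2" by (simp add: power_mult_distrib)
  assume "4*y^2 = m^2"
  then have "(2*y)^2 = m^2" by (simp add: power_mult_distrib)
  then have "2*y = m \<or> 2*y = -m" using power2_eq_iff by blast
  then show "2*y = m" using assms by linarith
qed

lemma descent_step:
  fixes p m :: int
  assumes p: "prime p" and m1: "1 < m" and mp: "m < p" and s: "sos4 (m*p)"
  shows "\<exists>r. 0 < r \<and> r < m \<and> sos4 (r*p)"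
proof -
  obtain x1 x2 x3 x4 where x: "m*p = x1^2+x2^2+x3^2+x4^2" using s unfolding sos4_def by blast
  have m0: "m > 0" using m1 by simp
  obtain k1 y1 where 1: "x1 = y1 + m*k1" "-((m-1) div 2) \<le> y1" "2*y1 \<le> m" using cent[OF m0] by blast
  obtain k2 y2 where 2: "x2 = y2 + m*k2" "-((m-1) div 2) \<le> y2" "2*y2 \<le> m" using cent[OF m0] by blast
  obtain k3 y3 where 3: "x3 = y3 + m*k3" "-((m-1) div 2) \<le> y3" "2*y3 \<le> m" using cent[OF m0] by blast
  obtain k4 y4 where 4: "x4 = y4 + m*k4" "-((m-1) div 2) \<le> y4" "2*y4 \<le> m" using cent[OF m0] by blast
  define S where "S = y1^2+y2^2+y3^2+y4^2"
  have "x1^2+x2^2+x3^2+x4^2 = S + m*(2*y1*k1+m*k1^2 + 2*y2*k2+m*k2^2 + 2*y3*k3+m*k3^2 + 2*y4*k4+m*k4^2)"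
    unfolding S_def 1(1) 2(1) 3(1) 4(1) by (simp add: power2_eq_square algebra_simps)
  then have "m dvd S" using x by (metis dvd_add_left_iff dvd_mult2 dvd_refl dvd_triv_left)
  then obtain r where r: "S = m*r" by blast
  have b1: "4*y1^2 \<le> m^2" "4*y2^2 \<le> m^2" "4*y3^2 \<le> m^2" "4*y4^2 \<le> m^2"
    using small_sq(1) 1 2 3 4 m0 by blast+
  have "4*S \<le> 4*m^2" unfolding S_def distrib_left using b1 by linarith
  moreover have "m*m = m^2" by (simp add: power2_eq_square)
  ultimately have "m*r \<le> m*m" using r by linarith
  then have rm: "r \<le> m" using m0 by simp
  have "S \<ge> 0" unfolding S_def by simp
  then have r0: "r \<ge> 0" using r m0 by (simp add: zero_le_mult_iff)
  have notdvd: "\<not> m dvd p"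
  proof
    assume "m dvd p"
    moreover have h: "\<forall>k. 0 \<le> k \<and> k dvd p \<longrightarrow> k = 1 \<or> k = p" using p prime_int_iff by blast
    ultimately have "m = 1 \<or> m = p" using m0 by simp
    then show False using m1 mp by simp
  qed
  have "r \<noteq> 0"
  proof
    assume "r = 0"
    then have S0: "S = 0" using r by simp
    have "y1^2 \<ge> 0" "y2^2 \<ge> 0" "y3^2 \<ge> 0" "y4^2 \<ge> 0" by simp_all
    then have "y1^2 = 0 \<and> y2^2 = 0 \<and> y3^2 = 0 \<and> y4^2 = 0" using S0 unfolding S_def by linarith
    then have "y1 = 0 \<and> y2 = 0 \<and> y3 = 0 \<and> y4 = 0" by simp
    then have "m*p = m*m*(k1^2+k2^2+k3^2+k4^2)" using x 1 2 3 4 by (simp add: power2_eq_square algebra_simps)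
    then have "p = m*(k1^2+k2^2+k3^2+k4^2)" using m0 by simp
    then show False using notdvd by simp
  qed
  moreover have "r \<noteq> m"
  proof
    assume "r = m"
    then have S4: "S = m^2" using r by (simp add: power2_eq_square)
    have "4*y1^2 = m^2 \<and> 4*y2^2 = m^2 \<and> 4*y3^2 = m^2 \<and> 4*y4^2 = m^2" using b1 S4 unfolding S_def by linarith
    then have e: "2*y1 = m" "2*y2 = m" "2*y3 = m" "2*y4 = m" using small_sq(2) 1 2 3 4 m0 by blast+
    then obtain t where t: "m = 2*t" by (metis dvd_triv_left dvdE)
    then have yt: "y1 = t" "y2 = t" "y3 = t" "y4 = t" using e by auto
    have "m*p = t*t*4*(1 + (k1+k1^2) + (k2+k2^2) + (k3+k3^2) + (k4+k4^2))"
      using x 1 2 3 4 yt t by (simp add: power2_eq_square algebra_simps)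
    then have "2*t*p = 2*t*(2*t*(1 + (k1+k1^2) + (k2+k2^2) + (k3+k3^2) + (k4+k4^2)))" using t by (simp add: algebra_simps)
    then have "p = m*(1 + (k1+k1^2) + (k2+k2^2) + (k3+k3^2) + (k4+k4^2))" using t m0 by simp
    then show False using notdvd by simp
  qed
  ultimately have rr: "0 < r" "r < m" using r0 rm by auto
  define z1 where "z1 = x1*y1+x2*y2+x3*y3+x4*y4"
  define z2 where "z2 = x1*y2-x2*y1+x3*y4-x4*y3"
  define z3 where "z3 = x1*y3-x2*y4-x3*y1+x4*y2"
  define z4 where "z4 = x1*y4+x2*y3-x3*y2-x4*y1"
  have E: "(m*p)*(m*r) = z1^2+z2^2+z3^2+z4^2"
  proof -
    have "(m*p)*(m*r) = (x1^2+x2^2+x3^2+x4^2)*S" using x r by simp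
    also have "\<dots> = z1^2+z2^2+z3^2+z4^2" unfolding S_def z1_def z2_def z3_def z4_def by (rule euler_id)
    finally show ?thesis .
  qed
  have "z1 = S + m*(k1*y1+k2*y2+k3*y3+k4*y4)" unfolding z1_def S_def 1(1) 2(1) 3(1) 4(1)
    by (simp add: power2_eq_square algebra_simps)
  then have "z1 = m*(r + (k1*y1+k2*y2+k3*y3+k4*y4))" using r by (simp add: algebra_simps)
  then obtain w1 where w1: "z1 = m*w1" by blast
  have "z2 = m*(k1*y2-k2*y1+k3*y4-k4*y3)" unfolding z2_def 1(1) 2(1) 3(1) 4(1)
    by (simp add: algebra_simps)
  then obtain w2 where w2: "z2 = m*w2" by blast
  have "z3 = m*(k1*y3-k2*y4-k3*y1+k4*y2)" unfolding z3_def 1(1) 2(1) 3(1) 4(1)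
    by (simp add: algebra_simps)
  then obtain w3 where w3: "z3 = m*w3" by blast
  have "z4 = m*(k1*y4+k2*y3-k3*y2-k4*y1)" unfolding z4_def 1(1) 2(1) 3(1) 4(1)
    by (simp add: algebra_simps)
  then obtain w4 where w4: "z4 = m*w4" by blast
  have "(m*m)*(r*p) = (m*m)*(w1^2+w2^2+w3^2+w4^2)" using E w1 w2 w3 w4
    by (simp add: power2_eq_square algebra_simps)
  then have "r*p = w1^2+w2^2+w3^2+w4^2" using m0 by simp
  then show ?thesis using rr unfolding sos4_def by blast
qed

lemma descent:
  fixes p :: int
  assumes p: "prime p"
  shows "0 < m \<Longrightarrow> m < p \<Longrightarrow> sos4 (m*p) \<Longrightarrow> sos4 p"
proof (induction "nat m" arbitrary: m rule: less_induct)
  case less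
  show ?case
  proof (cases "m = 1")
    case True then show ?thesis using less by simp
  next
    case False
    then obtain r where "0 < r" "r < m" "sos4 (r*p)" using descent_step[OF p, of m] less by auto
    then show ?thesis using less(1)[of r] less by auto
  qed
qed

lemma sos4_prime:
  fixes p :: int
  assumes p: "prime p"
  shows "sos4 p"
proof (cases "p = 2")
  case True
  then show ?thesis unfolding sos4_def by (intro exI[of _ 1] exI[of _ 0]) simp
next
  case False
  have "odd p"
  proof
    assume "even p"
    then have "2 dvd p" by simp
    have h: "\<forall>m. 0 \<le> m \<and> m dvd p \<longrightarrow> m = 1 \<or> m = p" using p prime_int_iff by blast
    have "(2::int) = 1 \<or> 2 = p" using h[rule_format, of 2] \<open>2 dvd p\<close> by simp
    then show False using False by simp
  qed
  then obtain x y where xy: "0 \<le> x" "2*x < p" "0 \<le> y" "2*y < p" "p dvd x^2+y^2+1"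
    using exists_xy[OF p] by blast
  then obtain m where m: "x^2+y^2+1 = p*m" by blast
  have p0: "p > 0" using p prime_gt_0_int by blast
  have "x^2+y^2+1 > 0" by (simp add: add_nonneg_pos)
  then have m0: "m > 0" using m p0 by (metis zero_less_mult_pos)
  have "(2*x)^2 < p^2" by (rule power_strict_mono) (use xy in auto)
  moreover have "(2*y)^2 < p^2" by (rule power_strict_mono) (use xy in auto)
  ultimately have "(2*x)^2 < p^2" "(2*y)^2 < p^2" by auto
  then have "4*x^2 < p^2" "4*y^2 < p^2" by (simp_all add: power_mult_distrib)
  then have A: "4*(x*x) < p*p" "4*(y*y) < p*p" by (simp_all add: power2_eq_square)
  have B: "x*x + y*y + 1 = p*m" using m by (simp add: power2_eq_square)
  have p2: "p \<ge> 2" using p prime_ge_2_int by blast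
  have C: "p*p \<ge> 4" using mult_mono[of 2 p 2 p] p2 by simp
  have "p*m < p*p" using A B C by linarith
  then have "m < p" using p0 by simp
  moreover have "sos4 (m*p)" unfolding sos4_def using m
    by (intro exI[of _ x] exI[of _ y] exI[of _ 1] exI[of _ 0]) (simp add: mult.commute)
  ultimately show ?thesis using descent[OF p m0] by blast
qed

lemma sos4_all:
  fixes n :: int
  shows "0 \<le> n \<Longrightarrow> sos4 n"
proof (induction "nat n" arbitrary: n rule: less_induct)
  case less
  show ?case
  proof (cases "n \<le> 1")
    case True
    then have "n = 0 \<or> n = 1" using less by auto
    moreover have "sos4 0" unfolding sos4_def by (intro exI[of _ 0]) simp
    moreover have "sos4 1" unfolding sos4_def by (intro exI[of _ 1] exI[of _ 0]) simp
    ultimately show ?thesis by auto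
  next
    case False
    then obtain p where p: "prime p" "p dvd n" using prime_divisor_exists[of n] by auto
    then obtain q where q: "n = p*q" by blast
    have p2: "p \<ge> 2" using p prime_ge_2_int by blast
    have "0 < p*q" using q False by simp
    then have q0: "q > 0" using p2 by (simp add: zero_less_mult_iff)
    have "(p-1)*q > 0" using q0 p2 by simp
    moreover have "n = q + (p-1)*q" by (simp add: q algebra_simps)
    ultimately have "q < n" by linarith
    then have "nat q < nat n" using q0 by simp
    then have "sos4 q" using less(1)[of q] q0 by simp
    then have "sos4 (p*q)" using sos4_mult sos4_prime[OF p(1)] by blast
    then show ?thesis using q by simp
  qed
qed



lemma Gamma_add: "a \<in> Gamma n \<Longrightarrow> b \<in> Gamma n \<Longrightarrow> a+b \<in> Gamma n"
proof -
  assume "a \<in> Gamma n" "b \<in> Gamma n"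
  then obtain xs ys where "\<forall>x\<in>set xs. x \<ge> int n" "a = (\<Sum>x\<leftarrow>xs. x^2)"
    "\<forall>x\<in>set ys. x \<ge> int n" "b = (\<Sum>x\<leftarrow>ys. x^2)" unfolding Gamma_def by blast
  then show ?thesis unfolding Gamma_def by (intro CollectI exI[of _ "xs@ys"]) auto
qed

lemma Gamma_sq: "int n \<le> x \<Longrightarrow> x^2 \<in> Gamma n"
  unfolding Gamma_def by (intro CollectI exI[of _ "[x]"]) auto

lemma Gamma_zero: "0 \<in> Gamma n"
  unfolding Gamma_def by (intro CollectI exI[of _ "[]"]) auto

lemma Gamma_mult: "int k * (int n)^2 \<in> Gamma n"
proof (induction k)
  case 0 then show ?case using Gamma_zero by simp
next
  case (Suc k)
  have "int (Suc k) * (int n)^2 = int k * (int n)^2 + (int n)^2" by (simp add: algebra_simps)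
  then show ?case using Gamma_add[OF Suc Gamma_sq[of n "int n"]] by simp
qed

lemma Gamma_pair:
  assumes "\<bar>a\<bar> \<le> 2 * int n"
  shows "(18*(int n)^2 + 2*a^2) \<in> Gamma n"
proof -
  have "(3*int n + a)^2 + (3*int n - a)^2 \<in> Gamma n"
    by (rule Gamma_add; rule Gamma_sq) (use assms in linarith)+
  moreover have "(3*int n + a)^2 + (3*int n - a)^2 = 18*(int n)^2 + 2*a^2"
    by (simp add: power2_eq_square algebra_simps)
  ultimately show ?thesis by simp
qed

lemma Gamma_even:
  assumes ss: "0 \<le> t" "t \<le> 4*(int n)^2"
  shows "(72*(int n)^2 + 2*t) \<in> Gamma n"
proof -
  obtain a b c d where abcd: "t = a^2+b^2+c^2+d^2" using sos4_all[OF ss(1)] unfolding sos4_def by blast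
  have bnd: "\<bar>z\<bar> \<le> 2*int n" if "z^2 \<le> 4*(int n)^2" for z
  proof -
    have "z^2 \<le> (2*int n)^2" using that by (simp add: power_mult_distrib)
    then have "\<bar>z\<bar> \<le> \<bar>2*int n\<bar>" using abs_le_square_iff by blast
    then show ?thesis by simp
  qed
  have "a^2 \<le> 4*(int n)^2" "b^2 \<le> 4*(int n)^2" "c^2 \<le> 4*(int n)^2" "d^2 \<le> 4*(int n)^2"
    using ss abcd zero_le_power2[of a] zero_le_power2[of b] zero_le_power2[of c] zero_le_power2[of d]
    by linarith+
  then have "(18*(int n)^2 + 2*a^2) + (18*(int n)^2 + 2*b^2) + (18*(int n)^2 + 2*c^2) + (18*(int n)^2 + 2*d^2) \<in> Gamma n"
    using bnd Gamma_pair Gamma_add by meson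
  moreover have "(18*(int n)^2 + 2*a^2) + (18*(int n)^2 + 2*b^2) + (18*(int n)^2 + 2*c^2) + (18*(int n)^2 + 2*d^2) = 72*(int n)^2 + 2*t"
    using abcd by simp
  ultimately show ?thesis by simp
qed

lemma Gamma_window:
  assumes n: "n \<ge> 1" and m: "77*(int n)^2 \<le> m" "m \<le> 80*(int n)^2"
  shows "m \<in> Gamma n"
proof (cases "even m")
  case True
  then obtain u where u: "m = 2*u" by blast
  have "72*(int n)^2 + 2*(u - 36*(int n)^2) \<in> Gamma n" by (rule Gamma_even) (use m u in linarith)+
  then show ?thesis using u by simp
next
  case False
  define N where "N = int n"
  define ov where "ov = N^2 + (N+1)^2"
  have oG: "ov \<in> Gamma n" unfolding ov_def N_def by (rule Gamma_add; rule Gamma_sq) simp_all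
  have N1: "N \<ge> 1" using n unfolding N_def by simp
  have "(N+1)^2 \<le> (2*N)^2" by (rule power_mono) (use N1 in linarith)+
  then have o5: "ov \<le> 5*N^2" unfolding ov_def by (simp add: power_mult_distrib)
  have oodd: "ov = 2*(N^2+N) + 1" unfolding ov_def by (simp add: power2_eq_square algebra_simps)
  have "even (m - ov)" using False oodd by simp
  then obtain u where u: "m - ov = 2*u" by blast
  have ov0: "ov \<ge> 0" unfolding ov_def by simp
  have m': "77*N^2 \<le> m" "m \<le> 80*N^2" using m unfolding N_def by auto
  have "0 \<le> u - 36*N^2" "u - 36*N^2 \<le> 4*N^2" using m' u o5 ov0 by linarith+
  then have "72*N^2 + 2*(u - 36*N^2) \<in> Gamma n" unfolding N_def by (rule Gamma_even)
  then have "(72*N^2 + 2*(u - 36*N^2)) + ov \<in> Gamma n" using oG Gamma_add by blast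
  moreover have "(72*N^2 + 2*(u - 36*N^2)) + ov = m" using u by simp
  ultimately show ?thesis by simp
qed

lemma Gamma_large:
  assumes n: "n \<ge> 1" and m: "77*(int n)^2 \<le> m"
  shows "m \<in> Gamma n"
proof -
  define N2 where "N2 = (int n)^2"
  have N2p: "N2 \<ge> 1" unfolding N2_def using n by simp
  define k where "k = (m - 77*N2) div N2"
  define r where "r = (m - 77*N2) mod N2"
  have "m - 77*N2 = N2*k + r" unfolding k_def r_def by simp
  moreover have r: "0 \<le> r" "r < N2" unfolding r_def using N2p by auto
  moreover have k: "k \<ge> 0" unfolding k_def using m N2p by (simp add: N2_def div_int_pos_iff)
  moreover have "N2*k = k*N2" by (simp add: mult.commute)
  ultimately have "m = (77*N2 + r) + k * N2" by linarith
  then have mk: "m = (77*N2 + r) + int (nat k) * N2" using k by simp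
  have "77*N2 + r \<in> Gamma n" by (rule Gamma_window) (use n r N2p in \<open>simp_all add: N2_def\<close>)
  then show ?thesis using mk Gamma_add Gamma_mult[of "nat k" n] unfolding N2_def by metis
qed

theorem theorem1:
  shows "\<exists>C::real. C > 0 \<and> (\<forall>n::nat. n \<ge> 1 \<longrightarrow> real_of_int (Frob (Gamma n)) \<le> C * (real n)^2)"
proof (intro exI[of _ 77] conjI allI impI)
  fix n :: nat assume n: "n \<ge> 1"
  define S where "S = {m::int. m \<ge> 0 \<and> m \<notin> Gamma n}"
  have sub: "S \<subseteq> {0..<77*(int n)^2}"
  proof
    fix m assume "m \<in> S"
    then have m: "0 \<le> m" "m \<notin> Gamma n" unfolding S_def by auto
    have "\<not> 77*(int n)^2 \<le> m" using m(2) Gamma_large[OF n] by blast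
    then show "m \<in> {0..<77*(int n)^2}" using m(1) by simp
  qed
  then have fin: "finite S" using finite_subset by blast
  have "Frob (Gamma n) \<le> 77*(int n)^2"
  proof (cases "S = {}")
    case True
    then have "Frob (Gamma n) = -1" unfolding Frob_def S_def[symmetric] by simp
    moreover have "0 \<le> 77*(int n)^2" by simp
    ultimately show ?thesis by linarith
  next
    case False
    then have "Max S \<in> S" using fin by simp
    then have "Max S < 77*(int n)^2" using sub by auto
    then show ?thesis unfolding Frob_def S_def[symmetric] using False by simp
  qed
  then have "real_of_int (Frob (Gamma n)) \<le> real_of_int (77*(int n)^2)" by (simp only: of_int_le_iff)
  then show "real_of_int (Frob (Gamma n)) \<le> 77 * (real n)^2" by simp
qed simp

end
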